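(* Let $\Delta$ be a smooth convex polygon with more than four edges. (i) If $e$ and $e'$ are parallel edges, then there is an edge, different from $e$ and $e'$ and not adjacent to $e$, which can be blown down. (ii) If $e,e',e''$ are consecutive adjacent edges with outward conormals $\alpha,\alpha',\alpha''$, and $\alpha'$ is not a positive linear combination of $\alpha$ and $\alpha''$, then there is an edge different from $e,e',e''$ which can be blown down.
   Context: A smooth polygon is a convex polygon $\bigcap_i\{x\in(\mathbb R^2)^*\mid\langle\eta_i,x\rangle\le\kappa_i\}$ whose primitive outward conormals at each vertex form a basis of $\mathbb Z^2$. An edge can be blown down if the polygon is the blowup of a smooth polygon at a vertex with that edge as exceptional divisor; for smooth polygons this holds exactly when the outward conormal of the edge equals the sum of the outward conormals of the two adjacent edges. (Blowup at a vertex $F_1\cap F_2$: intersect with $\{\langle\eta_1+\eta_2,x\rangle\le\kappa_1+\kappa_2-\epsilon\}$, $\epsilon>0$ small.) *)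

theory Defs
  imports "HOL-Analysis.Analysis"
begin

text \<open>A polygon with n edges is described by its outward conormals
  eta i :: int \<times> int and constants kappa i, for i < n, listed in cyclic order
  (indices modulo n).  Points live in real \<times> real (the dual plane).\<close>

definition pairing :: "int \<times> int \<Rightarrow> real \<times> real \<Rightarrow> real" where
  "pairing v x = of_int (fst v) * fst x + of_int (snd v) * snd x"

definition nxt :: "nat \<Rightarrow> nat \<Rightarrow> nat" where
  "nxt n i = (i + 1) mod n"

definition prv :: "nat \<Rightarrow> nat \<Rightarrow> nat" where
  "prv n i = (i + n - 1) mod n"

definition det2 :: "int \<times> int \<Rightarrow> int \<times> int \<Rightarrow> int" where
  "det2 v w = fst v * snd w - snd v * fst w"

definition primitive :: "int \<times> int \<Rightarrow> bool" where
  "primitive v \<longleftrightarrow> gcd (fst v) (snd v) = 1"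

definition polygon_set :: "nat \<Rightarrow> (nat \<Rightarrow> int \<times> int) \<Rightarrow> (nat \<Rightarrow> real) \<Rightarrow> (real \<times> real) set" where
  "polygon_set n eta kappa = {x. \<forall>i<n. pairing (eta i) x \<le> kappa i}"

definition edge_set :: "nat \<Rightarrow> (nat \<Rightarrow> int \<times> int) \<Rightarrow> (nat \<Rightarrow> real) \<Rightarrow> nat \<Rightarrow> (real \<times> real) set" where
  "edge_set n eta kappa i = polygon_set n eta kappa \<inter> {x. pairing (eta i) x = kappa i}"

definition smooth_polygon :: "nat \<Rightarrow> (nat \<Rightarrow> int \<times> int) \<Rightarrow> (nat \<Rightarrow> real) \<Rightarrow> bool" where
  "smooth_polygon n eta kappa \<longleftrightarrow>
     n \<ge> 3 \<and>
     bounded (polygon_set n eta kappa) \<and>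
     interior (polygon_set n eta kappa) \<noteq> {} \<and>
     inj_on eta {..<n} \<and>
     (\<forall>i<n. primitive (eta i)) \<and>
     (\<forall>i<n. \<exists>x\<in>edge_set n eta kappa i. \<exists>y\<in>edge_set n eta kappa i. x \<noteq> y) \<and>
     (\<forall>i<n. edge_set n eta kappa i \<inter> edge_set n eta kappa (nxt n i) \<noteq> {}) \<and>
     (\<forall>i<n. \<bar>det2 (eta i) (eta (nxt n i))\<bar> = 1)"

text \<open>Edge i can be blown down: by the criterion for smooth polygons, its conormal is
  the sum of the conormals of the two adjacent edges.\<close>
definition can_blow_down :: "nat \<Rightarrow> (nat \<Rightarrow> int \<times> int) \<Rightarrow> nat \<Rightarrow> bool" where
  "can_blow_down n eta i \<longleftrightarrow>
     fst (eta i) = fst (eta (prv n i)) + fst (eta (nxt n i)) \<and>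
     snd (eta i) = snd (eta (prv n i)) + snd (eta (nxt n i))"

definition adjacent_edges :: "nat \<Rightarrow> nat \<Rightarrow> nat \<Rightarrow> bool" where
  "adjacent_edges n i j \<longleftrightarrow> j = nxt n i \<or> j = prv n i"

definition parallel_edges :: "(nat \<Rightarrow> int \<times> int) \<Rightarrow> nat \<Rightarrow> nat \<Rightarrow> bool" where
  "parallel_edges eta i j \<longleftrightarrow> det2 (eta i) (eta j) = 0"

definition positive_combination :: "int \<times> int \<Rightarrow> int \<times> int \<Rightarrow> int \<times> int \<Rightarrow> bool" where
  "positive_combination v a b \<longleftrightarrow> (\<exists>s t :: real. s > 0 \<and> t > 0 \<and>
      of_int (fst v) = s * of_int (fst a) + t * of_int (fst b) \<and>
      of_int (snd v) = s * of_int (snd a) + t * of_int (snd b))"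

end

theory Submission
  imports Defs
begin


definition dt :: "int \<Rightarrow> int \<times> int \<Rightarrow> int \<times> int \<Rightarrow> int" where
  "dt \<sigma> v w = \<sigma> * det2 v w"
definition vadd :: "int \<times> int \<Rightarrow> int \<times> int \<Rightarrow> int \<times> int" where
  "vadd p q = (fst p + fst q, snd p + snd q)"
definition vneg :: "int \<times> int \<Rightarrow> int \<times> int" where
  "vneg p = (- fst p, - snd p)"
definition sm :: "int \<Rightarrow> int \<times> int \<Rightarrow> int \<times> int" where
  "sm a p = (a * fst p, a * snd p)"

lemma dt_add2: "dt s x (vadd y z) = dt s x y + dt s x z"
  by (simp add: dt_def det2_def vadd_def algebra_simps)
lemma dt_add1: "dt s (vadd y z) x = dt s y x + dt s z x"
  by (simp add: dt_def det2_def vadd_def algebra_simps)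
lemma dt_sm2: "dt s x (sm a y) = a * dt s x y"
  by (simp add: dt_def det2_def sm_def algebra_simps)
lemma dt_sm1: "dt s (sm a y) x = a * dt s y x"
  by (simp add: dt_def det2_def sm_def algebra_simps)
lemma dt_neg2: "dt s x (vneg y) = - dt s x y"
  by (simp add: dt_def det2_def vneg_def algebra_simps)
lemma dt_neg1: "dt s (vneg y) x = - dt s y x"
  by (simp add: dt_def det2_def vneg_def algebra_simps)
lemma dt_anti: "dt s x y = - dt s y x"
  by (simp add: dt_def det2_def algebra_simps)
lemma dt_self[simp]: "dt s x x = 0"
  by (simp add: dt_def det2_def algebra_simps)
lemma vneg_vneg[simp]: "vneg (vneg x) = x"
  by (simp add: vneg_def)
lemma sm1[simp]: "sm 1 x = x" by (simp add: sm_def)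
lemma dt_flip: "dt (-s) x y = dt s y x"
  by (simp add: dt_def det2_def algebra_simps)

lemma cramer:
  assumes "dt s q r = 1"
  shows "x = vadd (sm (dt s x r) q) (sm (dt s q x) r)"
proof -
  have h: "s * (fst q * snd r - snd q * fst r) = 1" using assms by (simp add: dt_def det2_def)
  have "fst x = s * (fst q * snd r - snd q * fst r) * fst x" using h by simp
  moreover have "snd x = s * (fst q * snd r - snd q * fst r) * snd x" using h by simp
  ultimately show ?thesis
    by (simp add: vadd_def sm_def dt_def det2_def prod_eq_iff algebra_simps)
qed

lemma aid:
  assumes "dt s p q = 1" "dt s q r = 1"
  shows "vadd p r = sm (dt s p r) q"
proof -
  have "p = vadd (sm (dt s p r) q) (sm (dt s q p) r)" using cramer[OF assms(2)] .
  moreover have "dt s q p = -1" using assms(1) dt_anti by (metis)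
  ultimately show ?thesis by (simp add: vadd_def sm_def prod_eq_iff)
qed

lemma mono_chain:
  assumes h1: "\<forall>k<m. dt s (X k) (X (Suc k)) = 1"
    and h2: "\<forall>k. 0 < k \<and> k < m \<longrightarrow> dt s (X (k-1)) (X (k+1)) \<ge> 2"
  shows "k \<le> m \<Longrightarrow> dt s (X 0) (X k) \<ge> int k \<and> (k < m \<longrightarrow> dt s (X 0) (X (Suc k)) \<ge> dt s (X 0) (X k) + 1)"
proof (induction k)
  case 0
  then show ?case using h1 by auto
next
  case (Suc k)
  then have ih: "dt s (X 0) (X k) \<ge> int k" "dt s (X 0) (X (Suc k)) \<ge> dt s (X 0) (X k) + 1" by auto
  have A: "dt s (X 0) (X (Suc k)) \<ge> int (Suc k)" using ih by linarith
  show ?case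
  proof (intro conjI impI A)
    assume "Suc k < m"
    have e1: "dt s (X k) (X (Suc k)) = 1" using h1 \<open>Suc k < m\<close> by auto
    have e2: "dt s (X (Suc k)) (X (Suc (Suc k))) = 1" using h1 \<open>Suc k < m\<close> by auto
    have av: "vadd (X k) (X (Suc (Suc k))) = sm (dt s (X k) (X (Suc (Suc k)))) (X (Suc k))"
      using aid[OF e1 e2] .
    have ag: "dt s (X k) (X (Suc (Suc k))) \<ge> 2" using h2[rule_format, of "Suc k"] \<open>Suc k < m\<close> by auto
    have "dt s (X 0) (X k) + dt s (X 0) (X (Suc (Suc k))) = dt s (X k) (X (Suc (Suc k))) * dt s (X 0) (X (Suc k))"
      using arg_cong[OF av, of "dt s (X 0)"] by (simp add: dt_add2 dt_sm2)
    moreover have "dt s (X k) (X (Suc (Suc k))) * dt s (X 0) (X (Suc k)) \<ge> 2 * dt s (X 0) (X (Suc k))"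
      using ag A by (intro mult_right_mono) auto
    ultimately show "dt s (X 0) (X (Suc (Suc k))) \<ge> dt s (X 0) (X (Suc k)) + 1" using ih by linarith
  qed
qed

lemma sign_change:
  fixes f :: "nat \<Rightarrow> int"
  shows "f 0 \<ge> 0 \<Longrightarrow> f m < 0 \<Longrightarrow> \<exists>k<m. f k \<ge> 0 \<and> f (Suc k) < 0"
proof (induction m)
  case 0 then show ?case by auto
next
  case (Suc m)
  show ?case
  proof (cases "f m < 0")
    case True
    then obtain k where "k < m" "f k \<ge> 0" "f (Suc k) < 0" using Suc by blast
    then show ?thesis by (intro exI[of _ k]) auto
  next
    case False
    then show ?thesis using Suc by (intro exI[of _ m]) auto
  qed
qed

lemma chain_le2:
  assumes h1: "\<forall>k<m. dt s (X k) (X (Suc k)) = 1"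
    and h2: "\<forall>k. 0 < k \<and> k < m \<longrightarrow> dt s (X (k-1)) (X (k+1)) \<ge> 2"
    and z1: "dt s (X 0) z = 1" and z2: "dt s z (X m) = 1"
  shows "m \<le> 2"
proof -
  define Y where "Y k = X (m - k)" for k
  have g1: "\<forall>k<m. dt (-s) (Y k) (Y (Suc k)) = 1"
  proof (intro allI impI)
    fix k assume "k < m"
    then have "m - k = Suc (m - Suc k)" by auto
    then show "dt (-s) (Y k) (Y (Suc k)) = 1" using h1 \<open>k<m\<close> by (simp add: Y_def dt_flip)
  qed
  have g2: "\<forall>k. 0 < k \<and> k < m \<longrightarrow> dt (-s) (Y (k-1)) (Y (k+1)) \<ge> 2"
  proof (intro allI impI)
    fix k assume k: "0 < k \<and> k < m"
    then have "m - (k - 1) = (m - k) + 1" "m - (k+1) = (m - k) - 1" by auto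
    then show "dt (-s) (Y (k-1)) (Y (k+1)) \<ge> 2" using h2[rule_format, of "m-k"] k
      by (simp add: Y_def dt_flip)
  qed
  have B: "\<And>k. k \<le> m \<Longrightarrow> dt s (X 0) (X k) \<ge> int k"
    using mono_chain[OF h1 h2] by blast
  have C0: "\<And>k. k \<le> m \<Longrightarrow> dt (-s) (Y 0) (Y k) \<ge> int k"
    using mono_chain[OF g1 g2] by blast
  have C: "\<And>k. k \<le> m \<Longrightarrow> dt s (X k) (X m) \<ge> int m - int k"
  proof -
    fix k assume "k \<le> m"
    have "dt (-s) (Y 0) (Y (m-k)) \<ge> int (m - k)" by (rule C0) simp
    moreover have "Y 0 = X m" "Y (m-k) = X k" using \<open>k \<le> m\<close> by (simp_all add: Y_def)
    ultimately show "dt s (X k) (X m) \<ge> int m - int k" using \<open>k \<le> m\<close> by (simp add: dt_flip)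
  qed
  define f where "f k = dt s (X k) z" for k
  have "f 0 \<ge> 0" using z1 by (simp add: f_def)
  moreover have "f m < 0" using z2 dt_anti[of s z "X m"] by (simp add: f_def)
  ultimately obtain k where k: "k < m" "f k \<ge> 0" "f (Suc k) < 0" using sign_change by blast
  have e: "dt s (X k) (X (Suc k)) = 1" using h1 k by auto
  have zz: "z = vadd (sm (dt s z (X (Suc k))) (X k)) (sm (dt s (X k) z) (X (Suc k)))"
    using cramer[OF e] .
  define \<alpha> where "\<alpha> = dt s z (X (Suc k))"
  define \<beta> where "\<beta> = dt s (X k) z"
  have al: "\<alpha> \<ge> 1" using k(3) dt_anti[of s z] by (simp add: f_def \<alpha>_def)
  have be: "\<beta> \<ge> 0" using k(2) by (simp add: f_def \<beta>_def)
  have zz': "z = vadd (sm \<alpha> (X k)) (sm \<beta> (X (Suc k)))" using zz by (simp add: \<alpha>_def \<beta>_def)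
  have eq1: "1 = \<alpha> * dt s (X 0) (X k) + \<beta> * dt s (X 0) (X (Suc k))"
    using z1 arg_cong[OF zz', of "dt s (X 0)"] by (simp add: dt_add2 dt_sm2)
  have eq2: "1 = \<alpha> * dt s (X k) (X m) + \<beta> * dt s (X (Suc k)) (X m)"
    using z2 arg_cong[OF zz', of "\<lambda>v. dt s v (X m)"] by (simp add: dt_add1 dt_sm1)
  have b1: "dt s (X 0) (X k) \<ge> int k" "dt s (X 0) (X (Suc k)) \<ge> int (Suc k)"
    using B[of k] B[of "Suc k"] k by auto
  have c1: "dt s (X k) (X m) \<ge> int m - int k" "dt s (X (Suc k)) (X m) \<ge> int m - int (Suc k)"
    using C[of k] C[of "Suc k"] k by auto
  have "\<alpha> * dt s (X 0) (X k) \<ge> 1 * dt s (X 0) (X k)"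
    using al b1 by (intro mult_right_mono) auto
  moreover have "\<beta> * dt s (X 0) (X (Suc k)) \<ge> 0" using be b1 by simp
  ultimately have "int k \<le> 1" using eq1 b1 by linarith
  have "\<alpha> * dt s (X k) (X m) \<ge> 1 * dt s (X k) (X m)"
    using al c1 k by (intro mult_right_mono) auto
  moreover have "\<beta> * dt s (X (Suc k)) (X m) \<ge> 0" using be c1 k by simp
  ultimately have "int m - int k \<le> 1" using eq2 c1 by linarith
  with \<open>int k \<le> 1\<close> show ?thesis by linarith
qed



lemma half_chain:
  assumes h1: "\<forall>k<m. dt s (X k) (X (Suc k)) = 1"
    and hm: "X m = vneg (X 0)"
    and hp: "\<forall>k. 0 < k \<and> k < m \<longrightarrow> dt s (X 0) (X k) > 0"
    and m3: "m \<ge> 3"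
  shows "\<exists>j. 2 \<le> j \<and> j < m \<and> dt s (X (j-1)) (X (j+1)) = 1"
proof (rule ccontr)
  assume neg: "\<not> ?thesis"
  have pos: "dt s (X (j-1)) (X (j+1)) \<ge> 1" if j: "0 < j" "j < m" for j
  proof -
    have e1: "dt s (X (j-1)) (X j) = 1" using h1[rule_format, of "j-1"] j by simp
    have e2: "dt s (X j) (X (j+1)) = 1" using h1[rule_format, of j] j by simp
    have av: "vadd (X (j-1)) (X (j+1)) = sm (dt s (X (j-1)) (X (j+1))) (X j)" using aid[OF e1 e2] .
    have eq: "dt s (X 0) (X (j-1)) + dt s (X 0) (X (j+1)) = dt s (X (j-1)) (X (j+1)) * dt s (X 0) (X j)"
      using arg_cong[OF av, of "dt s (X 0)"] by (simp add: dt_add2 dt_sm2)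
    have qj: "dt s (X 0) (X j) > 0" using hp j by auto
    have q1: "dt s (X 0) (X (j-1)) \<ge> 0"
    proof (cases "j - 1 = 0")
      case True then show ?thesis by simp
    next
      case False then show ?thesis using hp j by (auto intro: less_imp_le)
    qed
    have q2: "dt s (X 0) (X (j+1)) \<ge> 0"
    proof (cases "j + 1 = m")
      case True then show ?thesis using hm by (simp add: dt_neg2)
    next
      case False then show ?thesis using hp j by (auto intro: less_imp_le)
    qed
    have "dt s (X 0) (X (j-1)) > 0 \<or> dt s (X 0) (X (j+1)) > 0"
    proof (cases "j = 1")
      case True then show ?thesis using hp m3 by auto
    next
      case False then show ?thesis using hp j by auto
    qed
    then have "dt s (X (j-1)) (X (j+1)) * dt s (X 0) (X j) > 0" using eq q1 q2 by linarith
    then have "dt s (X (j-1)) (X (j+1)) > 0" using qj zero_less_mult_pos2 by blast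
    then show ?thesis by simp
  qed
  define Z where "Z k = X (k+1)" for k
  define z where "z = vadd (X 1) (vneg (X 0))"
  have g1: "\<forall>k<m-1. dt s (Z k) (Z (Suc k)) = 1" using h1 by (simp add: Z_def)
  have g2: "\<forall>k. 0 < k \<and> k < m-1 \<longrightarrow> dt s (Z (k-1)) (Z (k+1)) \<ge> 2"
  proof (intro allI impI)
    fix k assume k: "0 < k \<and> k < m-1"
    have "dt s (X (k+1-1)) (X (k+1+1)) \<ge> 1" using pos[of "k+1"] k by auto
    moreover have "\<not> (2 \<le> k+1 \<and> k+1 < m \<and> dt s (X (k+1-1)) (X (k+1+1)) = 1)" using neg by blast
    then have "dt s (X (k+1-1)) (X (k+1+1)) \<noteq> 1" using k by auto
    ultimately show "dt s (Z (k-1)) (Z (k+1)) \<ge> 2" using k by (simp add: Z_def)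
  qed
  have e01: "dt s (X 0) (X 1) = 1" using h1 m3 by auto
  have z1: "dt s (Z 0) z = 1" using e01
    by (simp add: Z_def z_def dt_add2 dt_neg2 dt_anti[of s "X (Suc 0)" "X 0"])
  have z2: "dt s z (Z (m-1)) = 1" using e01 hm m3
    by (simp add: Z_def z_def dt_add1 dt_neg1 dt_neg2 dt_anti[of s "X (Suc 0)" "X 0"])
  have "m - 1 \<le> 2" using chain_le2[OF g1 g2 z1 z2] .
  then have m: "m = 3" using m3 by simp
  have "dt s (X 1) (X 3) = 1" using hm m e01 by (simp add: dt_neg2 dt_anti[of s "X (Suc 0)" "X 0"])
  then show False using neg m by (metis One_nat_def Suc_1 Suc_eq_plus1 diff_Suc_1 eval_nat_numeral(3) lessI order_refl)
qed

lemma half_chain_rev: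
  assumes h1: "\<forall>k<m. dt s (X k) (X (Suc k)) = 1"
    and hm: "X m = vneg (X 0)"
    and hp: "\<forall>k. 0 < k \<and> k < m \<longrightarrow> dt s (X 0) (X k) > 0"
    and m3: "m \<ge> 3"
  shows "\<exists>j. 1 \<le> j \<and> j + 2 \<le> m \<and> dt s (X (j-1)) (X (j+1)) = 1"
proof -
  define Y where "Y k = X (m - k)" for k
  have g1: "\<forall>k<m. dt (-s) (Y k) (Y (Suc k)) = 1"
  proof (intro allI impI)
    fix k assume "k < m"
    then have "m - k = Suc (m - Suc k)" by auto
    then show "dt (-s) (Y k) (Y (Suc k)) = 1" using h1 \<open>k<m\<close> by (simp add: Y_def dt_flip)
  qed
  have gm: "Y m = vneg (Y 0)" using hm by (simp add: Y_def)
  have gp: "\<forall>k. 0 < k \<and> k < m \<longrightarrow> dt (-s) (Y 0) (Y k) > 0"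
  proof (intro allI impI)
    fix k assume k: "0 < k \<and> k < m"
    have "dt s (X 0) (X (m-k)) > 0" using hp k by auto
    then show "dt (-s) (Y 0) (Y k) > 0" using hm by (simp add: Y_def dt_flip dt_neg1 dt_anti[of s "X (m-k)" "X 0"])
  qed
  obtain j where j: "2 \<le> j" "j < m" "dt (-s) (Y (j-1)) (Y (j+1)) = 1"
    using half_chain[OF g1 gm gp m3] by blast
  have "m - (j-1) = (m - j) + 1" "m - (j+1) = (m-j) - 1" using j by auto
  then have "dt s (X ((m-j) - 1)) (X ((m-j)+1)) = 1" using j(3) by (simp add: Y_def dt_flip)
  then show ?thesis using j by (intro exI[of _ "m-j"]) auto
qed

lemma core2:
  assumes n5: "n \<ge> 5"
    and h1: "\<forall>k. dt s (W k) (W (Suc k)) = 1"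
    and hn: "W n = W 0"
    and c1: "\<forall>j. 3 \<le> j \<and> j < n \<longrightarrow> \<not> (dt s (W j) (W 1) \<ge> 0 \<and> dt s (W 0) (W j) \<ge> 0)"
    and c2: "\<forall>j. 3 \<le> j \<and> j < n \<longrightarrow> \<not> (dt s (W j) (W 2) \<ge> 0 \<and> dt s (W 1) (W j) \<ge> 0)"
    and a0: "dt s (W 0) (W 2) \<le> 0"
  shows "\<exists>j. 3 \<le> j \<and> j < n \<and> dt s (W (j-1)) (W (j+1)) = 1"
proof (rule ccontr)
  assume neg: "\<not> ?thesis"
  have av0: "vadd (W 0) (W 2) = sm (dt s (W 0) (W 2)) (W 1)"
    using aid[of s "W 0" "W 1" "W 2"] h1 by (simp add: numeral_2_eq_2)
  have q: "dt s (W 0) (W j) < 0" if j: "3 \<le> j" "j < n" for j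
  proof (rule ccontr)
    assume "\<not> dt s (W 0) (W j) < 0"
    then have A: "dt s (W 0) (W j) \<ge> 0" by simp
    then have B: "dt s (W j) (W 1) < 0" using c1 j by auto
    then have "dt s (W 1) (W j) \<ge> 0" using dt_anti[of s "W 1" "W j"] by simp
    then have C: "dt s (W j) (W 2) < 0" using c2 j by auto
    have "dt s (W j) (W 0) + dt s (W j) (W 2) = dt s (W 0) (W 2) * dt s (W j) (W 1)"
      using arg_cong[OF av0, of "dt s (W j)"] by (simp add: dt_add2 dt_sm2)
    moreover have "dt s (W 0) (W 2) * dt s (W j) (W 1) \<ge> 0" using a0 B
      by (simp add: mult_nonpos_nonpos)
    ultimately show False using A C dt_anti[of s "W j" "W 0"] by linarith
  qed
  have pos: "dt s (W (j-1)) (W (j+1)) \<ge> 1" if j: "3 \<le> j" "j < n" for j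
  proof -
    have e1: "dt s (W (j-1)) (W j) = 1" using h1[rule_format, of "j-1"] j by simp
    have e2: "dt s (W j) (W (j+1)) = 1" using h1[rule_format, of j] j by simp
    have av: "vadd (W (j-1)) (W (j+1)) = sm (dt s (W (j-1)) (W (j+1))) (W j)" using aid[OF e1 e2] .
    have eq: "dt s (W 0) (W (j-1)) + dt s (W 0) (W (j+1)) = dt s (W (j-1)) (W (j+1)) * dt s (W 0) (W j)"
      using arg_cong[OF av, of "dt s (W 0)"] by (simp add: dt_add2 dt_sm2)
    have q1: "dt s (W 0) (W (j-1)) \<le> 0"
    proof (cases "j = 3")
      case True then show ?thesis using a0 by simp
    next
      case False then have "3 \<le> j-1" "j-1 < n" using j by auto
      then show ?thesis using q[of "j-1"] by simp
    qed
    have q2: "dt s (W 0) (W (j+1)) \<le> 0"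
    proof (cases "j + 1 = n")
      case True then show ?thesis using hn by simp
    next
      case False then have "3 \<le> j+1" "j+1 < n" using j by auto
      then show ?thesis using q[of "j+1"] by simp
    qed
    have "dt s (W 0) (W (j-1)) < 0 \<or> dt s (W 0) (W (j+1)) < 0"
    proof (cases "j = 3")
      case True then have "3 \<le> j+1" "j+1 < n" using j n5 by auto
      then show ?thesis using q[of "j+1"] by simp
    next
      case False then have "3 \<le> j-1" "j-1 < n" using j by auto
      then show ?thesis using q[of "j-1"] by simp
    qed
    then have "dt s (W (j-1)) (W (j+1)) * dt s (W 0) (W j) < 0" using eq q1 q2 by linarith
    then have "dt s (W (j-1)) (W (j+1)) > 0" using q[OF j]
      by (simp add: mult_less_0_iff)
    then show ?thesis by simp
  qed
  define X where "X k = W (k+2)" for k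
  define z where "z = vneg (W 1)"
  have g1: "\<forall>k<n-2. dt s (X k) (X (Suc k)) = 1" using h1 by (simp add: X_def)
  have g2: "\<forall>k. 0 < k \<and> k < n-2 \<longrightarrow> dt s (X (k-1)) (X (k+1)) \<ge> 2"
  proof (intro allI impI)
    fix k assume k: "0 < k \<and> k < n-2"
    have "dt s (W (k+2-1)) (W (k+2+1)) \<ge> 1" using pos[of "k+2"] k by auto
    moreover have "\<not> (3 \<le> k+2 \<and> k+2 < n \<and> dt s (W (k+2-1)) (W (k+2+1)) = 1)" using neg by blast
    then have "dt s (W (k+2-1)) (W (k+2+1)) \<noteq> 1" using k by auto
    moreover have "k - 1 + 2 = k+2-1" "k+1+2 = k+2+1" using k by auto
    ultimately show "dt s (X (k-1)) (X (k+1)) \<ge> 2" by (simp add: X_def)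
  qed
  have e12: "dt s (W 1) (W 2) = 1" using h1[rule_format, of 1] by (simp add: numeral_2_eq_2)
  have e01: "dt s (W 0) (W 1) = 1" using h1[rule_format, of 0] by simp
  have "dt s (W 2) (W 1) = -1" using e12 dt_anti[of s "W 2" "W 1"] by simp
  then have z1: "dt s (X 0) z = 1"
    unfolding X_def z_def dt_neg2 by (simp add: numeral_2_eq_2)
  have "n - 2 + 2 = n" using n5 by simp
  moreover have "dt s (W 1) (W 0) = -1" using e01 dt_anti[of s "W 1" "W 0"] by simp
  ultimately have z2: "dt s z (X (n-2)) = 1" using hn
    unfolding X_def z_def dt_neg1 by simp
  have "n - 2 \<le> 2" using chain_le2[OF g1 g2 z1 z2] .
  then show False using n5 by simp
qed



lemma mod_shift_inj:
  fixes s j k n :: nat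
  assumes "(s + j) mod n = (s + k) mod n" "j < n" "k < n"
  shows "j = k"
proof -
  define r where "r = s mod n"
  have rn: "r < n" using assms(2) by (simp add: r_def)
  have e: "(r + j) mod n = (r + k) mod n" using assms(1)
    by (simp add: r_def mod_add_left_eq)
  have m: "(r + x) mod n = (if r + x < n then r + x else r + x - n)" if "x < n" for x
  proof (cases "r + x < n")
    case True then show ?thesis by simp
  next
    case False
    then have "(r + x) mod n = (r + x - n) mod n" by (simp add: le_mod_geq)
    also have "\<dots> = r + x - n" using rn that by simp
    finally show ?thesis using False by simp
  qed
  show ?thesis using e m[OF assms(2)] m[OF assms(3)] rn assms(2,3) by (auto split: if_splits)
qed

lemma mod_prev:
  fixes s j n :: nat
  assumes "0 < j" "0 < n"
  shows "((s + j) mod n + n - 1) mod n = (s + (j - 1)) mod n"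
proof -
  have "(s + j) mod n + n - 1 = (s + j) mod n + (n - 1)" using assms by simp
  then have "((s + j) mod n + n - 1) mod n = (s + j + (n - 1)) mod n"
    by (simp add: mod_add_left_eq)
  also have "s + j + (n - 1) = (s + (j - 1)) + n" using assms by simp
  finally show ?thesis by simp
qed

lemma mod_next:
  fixes s j n :: nat
  shows "((s + j) mod n + 1) mod n = (s + (j + 1)) mod n"
  by (simp add: mod_Suc_eq)

lemma prim_scale:
  assumes "t \<ge> 0" "primitive v" "primitive w" "v = (t * fst w, t * snd w)"
  shows "v = w"
proof -
  have "gcd (t * fst w) (t * snd w) = \<bar>t\<bar> * gcd (fst w) (snd w)"
    by (simp add: gcd_mult_distrib_int)
  then have "t = 1" using assms by (simp add: primitive_def)
  then show ?thesis using assms by simp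
qed

lemma prim_par:
  assumes pv: "primitive v" and pw: "primitive w" and d: "det2 v w = 0"
  shows "v = w \<or> v = vneg w"
proof -
  obtain a b where v: "v = (a, b)" by (cases v)
  obtain c e where w: "w = (c, e)" by (cases w)
  have eq: "a * e = b * c" using d by (simp add: det2_def v w)
  have cab: "coprime a b" using pv by (simp add: primitive_def v coprime_iff_gcd_eq_1)
  have cce: "coprime c e" using pw by (simp add: primitive_def w coprime_iff_gcd_eq_1)
  have "a dvd b * c" using eq by (metis dvd_triv_left)
  then have ac: "a dvd c" using cab coprime_dvd_mult_right_iff by blast
  have "c dvd e * a" using eq by (metis dvd_triv_right mult.commute)
  then have ca: "c dvd a" using cce coprime_dvd_mult_right_iff by blast
  have "b dvd a * e" unfolding eq by simp
  then have be: "b dvd e" using cab coprime_dvd_mult_right_iff coprime_commute by blast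
  have "e dvd c * b" using eq by (metis dvd_triv_left mult.commute)
  then have eb: "e dvd b" using cce coprime_dvd_mult_right_iff coprime_commute by blast
  have A: "\<bar>a\<bar> = \<bar>c\<bar>" using ac ca zdvd_antisym_abs by blast
  have B: "\<bar>b\<bar> = \<bar>e\<bar>" using be eb zdvd_antisym_abs by blast
  have "(a = c \<and> b = e) \<or> (a = - c \<and> b = - e)"
  proof (cases "a = 0")
    case True
    then have "c = 0" using A by simp
    then show ?thesis using True B by (auto simp: abs_eq_iff)
  next
    case False
    then have c0: "c \<noteq> 0" using A by auto
    show ?thesis
    proof (cases "a = c")
      case True
      then have "a * e = a * b" using eq by (simp add: mult.commute)
      then show ?thesis using True False by simp
    next
      case F2: False
      then have "a = - c" using A by (auto simp: abs_eq_iff)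
      then have "c * (- e) = c * b" using eq by (simp add: algebra_simps)
      then have "b = - e" using c0 by (metis mult_left_cancel)
      then show ?thesis using \<open>a = - c\<close> by simp
    qed
  qed
  then show ?thesis by (auto simp: v w vneg_def)
qed

lemma pair_lin:
  assumes "fst c = s * fst a + t * fst b" "snd c = s * snd a + t * snd b"
  shows "pairing c x = of_int s * pairing a x + of_int t * pairing b x"
  using assms by (simp add: pairing_def algebra_simps)

lemma pair_inj:
  assumes "det2 v w \<noteq> 0" "pairing v x = pairing v y" "pairing w x = pairing w y"
  shows "x = y"
proof -
  define d1 where "d1 = fst x - fst y"
  define d2 where "d2 = snd x - snd y"
  define D where "D = (of_int (det2 v w) :: real)"
  have D0: "D \<noteq> 0" using assms(1) by (simp add: D_def)
  have e1: "of_int (fst v) * d1 + of_int (snd v) * d2 = 0"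
    using assms(2) by (simp add: pairing_def d1_def d2_def algebra_simps)
  have e2: "of_int (fst w) * d1 + of_int (snd w) * d2 = 0"
    using assms(3) by (simp add: pairing_def d1_def d2_def algebra_simps)
  have "d1 * D = of_int (snd w) * (of_int (fst v) * d1 + of_int (snd v) * d2) - of_int (snd v) * (of_int (fst w) * d1 + of_int (snd w) * d2)"
    by (simp add: D_def det2_def algebra_simps)
  then have "d1 * D = 0" using e1 e2 by simp
  then have "d1 = 0" using D0 by simp
  have "d2 * D = of_int (fst v) * (of_int (fst w) * d1 + of_int (snd w) * d2) - of_int (fst w) * (of_int (fst v) * d1 + of_int (snd v) * d2)"
    by (simp add: D_def det2_def algebra_simps)
  then have "d2 * D = 0" using e1 e2 by simp
  then have "d2 = 0" using D0 by simp
  show ?thesis using \<open>d1 = 0\<close> \<open>d2 = 0\<close> by (simp add: d1_def d2_def prod_eq_iff)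
qed

lemma nxt_lt: "0 < n \<Longrightarrow> nxt n i < n" by (simp add: nxt_def)

lemma cone_geo:
  assumes sp: "smooth_polygon n eta kappa" and i: "i < n" and j: "j < n"
    and s: "s \<ge> 0" and t: "t \<ge> 0"
    and hf: "fst (eta j) = s * fst (eta i) + t * fst (eta (nxt n i))"
    and hs: "snd (eta j) = s * snd (eta i) + t * snd (eta (nxt n i))"
  shows "j = i \<or> j = nxt n i"
proof (rule ccontr)
  assume nj: "\<not> (j = i \<or> j = nxt n i)"
  let ?v = "eta (nxt n i)"
  have n0: "0 < n" using i by simp
  have ni: "nxt n i < n" using nxt_lt[OF n0] .
  have prims: "\<forall>i<n. primitive (eta i)" and inj: "inj_on eta {..<n}"
    and ed: "\<forall>i<n. \<exists>x\<in>edge_set n eta kappa i. \<exists>y\<in>edge_set n eta kappa i. x \<noteq> y"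
    and meet: "\<forall>i<n. edge_set n eta kappa i \<inter> edge_set n eta kappa (nxt n i) \<noteq> {}"
    and dets: "\<forall>i<n. \<bar>det2 (eta i) (eta (nxt n i))\<bar> = 1"
    using sp unfolding smooth_polygon_def by auto
  obtain p where p1: "p \<in> edge_set n eta kappa i" and p2: "p \<in> edge_set n eta kappa (nxt n i)"
    using meet i by blast
  obtain x y where x: "x \<in> edge_set n eta kappa j" and y: "y \<in> edge_set n eta kappa j" and xy: "x \<noteq> y"
    using ed j by blast
  have key: "(s > 0 \<longrightarrow> pairing (eta i) z = kappa i) \<and> (t > 0 \<longrightarrow> pairing ?v z = kappa (nxt n i))"
    if z: "z \<in> edge_set n eta kappa j" for z
  proof -
    have zi: "pairing (eta i) z \<le> kappa i" using z i by (simp add: edge_set_def polygon_set_def)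
    have zv: "pairing ?v z \<le> kappa (nxt n i)" using z ni by (simp add: edge_set_def polygon_set_def)
    have zj: "pairing (eta j) z = kappa j" using z by (simp add: edge_set_def)
    have pj: "pairing (eta j) p \<le> kappa j" using p1 j by (simp add: edge_set_def polygon_set_def)
    have pi: "pairing (eta i) p = kappa i" using p1 by (simp add: edge_set_def)
    have pv: "pairing ?v p = kappa (nxt n i)" using p2 by (simp add: edge_set_def)
    have lz: "pairing (eta j) z = of_int s * pairing (eta i) z + of_int t * pairing ?v z"
      using pair_lin[OF hf hs] .
    have lp: "pairing (eta j) p = of_int s * pairing (eta i) p + of_int t * pairing ?v p"
      using pair_lin[OF hf hs] .
    have A: "of_int s * (kappa i - pairing (eta i) z) \<ge> 0" using s zi by simp
    have B: "of_int t * (kappa (nxt n i) - pairing ?v z) \<ge> 0" using t zv by simp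
    have "of_int s * (kappa i - pairing (eta i) z) + of_int t * (kappa (nxt n i) - pairing ?v z) \<le> 0"
      using lz lp zj pj pi pv by (simp add: algebra_simps)
    then have A0: "of_int s * (kappa i - pairing (eta i) z) = 0"
      and B0: "of_int t * (kappa (nxt n i) - pairing ?v z) = 0" using A B by linarith+
    show ?thesis using A0 B0 by auto
  qed
  show False
  proof (cases "s > 0 \<and> t > 0")
    case True
    have "x = y"
    proof (rule pair_inj)
      show "det2 (eta i) ?v \<noteq> 0" using dets i by fastforce
      show "pairing (eta i) x = pairing (eta i) y" using key[OF x] key[OF y] True by simp
      show "pairing ?v x = pairing ?v y" using key[OF x] key[OF y] True by simp
    qed
    then show False using xy by simp
  next
    case False
    then have "s = 0 \<or> t = 0" using s t by auto
    then show False
    proof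
      assume "s = 0"
      then have "eta j = (t * fst ?v, t * snd ?v)" using hf hs by (simp add: prod_eq_iff)
      then have "eta j = ?v" using prim_scale t prims j ni by blast
      then have "j = nxt n i" using inj j ni by (auto dest: inj_onD)
      then show False using nj by simp
    next
      assume "t = 0"
      then have "eta j = (s * fst (eta i), s * snd (eta i))" using hf hs by (simp add: prod_eq_iff)
      then have "eta j = eta i" using prim_scale s prims j i by blast
      then have "j = i" using inj j i by (auto dest: inj_onD)
      then show False using nj by simp
    qed
  qed
qed

lemma Cint:
  assumes sp: "smooth_polygon n eta kappa" and i: "i < n" and j: "j < n"
    and ji: "j \<noteq> i" and jn: "j \<noteq> nxt n i"
  shows "\<not> (det2 (eta j) (eta (nxt n i)) * det2 (eta i) (eta (nxt n i)) \<ge> 0 \<and>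
            det2 (eta i) (eta j) * det2 (eta i) (eta (nxt n i)) \<ge> 0)"
proof
  let ?a = "eta i" and ?b = "eta (nxt n i)" and ?c = "eta j"
  define D where "D = det2 ?a ?b"
  assume h: "det2 ?c ?b * det2 ?a ?b \<ge> 0 \<and> det2 ?a ?c * det2 ?a ?b \<ge> 0"
  have "\<bar>D\<bar> = 1" using sp i unfolding smooth_polygon_def D_def by auto
  then have DD: "D * D = 1" by (metis abs_mult_self_eq mult_1)
  have i1: "det2 ?c ?b * fst ?a + det2 ?a ?c * fst ?b = D * fst ?c"
    by (simp add: D_def det2_def algebra_simps)
  have i2: "det2 ?c ?b * snd ?a + det2 ?a ?c * snd ?b = D * snd ?c"
    by (simp add: D_def det2_def algebra_simps)
  have f: "fst ?c = (det2 ?c ?b * D) * fst ?a + (det2 ?a ?c * D) * fst ?b"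
  proof -
    have "(det2 ?c ?b * D) * fst ?a + (det2 ?a ?c * D) * fst ?b = D * (det2 ?c ?b * fst ?a + det2 ?a ?c * fst ?b)"
      by (simp add: algebra_simps)
    also have "\<dots> = (D * D) * fst ?c" using i1 by simp
    finally show ?thesis using DD by simp
  qed
  have g: "snd ?c = (det2 ?c ?b * D) * snd ?a + (det2 ?a ?c * D) * snd ?b"
  proof -
    have "(det2 ?c ?b * D) * snd ?a + (det2 ?a ?c * D) * snd ?b = D * (det2 ?c ?b * snd ?a + det2 ?a ?c * snd ?b)"
      by (simp add: algebra_simps)
    also have "\<dots> = (D * D) * snd ?c" using i2 by simp
    finally show ?thesis using DD by simp
  qed
  have "j = i \<or> j = nxt n i"
    using cone_geo[OF sp i j _ _ f g] h by (simp add: D_def)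
  then show False using ji jn by simp
qed



lemma nxt_facts:
  assumes "3 \<le> n" "i < n"
  shows "nxt n i \<noteq> i" "nxt n (nxt n i) \<noteq> i" "nxt n (nxt n i) \<noteq> nxt n i"
    "nxt n i < n" "nxt n (nxt n i) < n"
proof -
  have a: "nxt n i = (i + 1) mod n" by (simp add: nxt_def)
  have b: "nxt n (nxt n i) = (i + 2) mod n" by (simp add: nxt_def mod_Suc_eq)
  have c: "i = (i + 0) mod n" using assms by simp
  show "nxt n i \<noteq> i" using mod_shift_inj[of i 1 n 0] assms a c by auto
  show "nxt n (nxt n i) \<noteq> i" using mod_shift_inj[of i 2 n 0] assms b c by auto
  show "nxt n (nxt n i) \<noteq> nxt n i" using mod_shift_inj[of i 2 n 1] assms a b by auto
  show "nxt n i < n" "nxt n (nxt n i) < n" using assms by (simp_all add: nxt_def)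
qed

lemma orient_local:
  assumes sp: "smooth_polygon n eta kappa" and i: "i < n"
  shows "det2 (eta i) (eta (nxt n i)) = det2 (eta (nxt n i)) (eta (nxt n (nxt n i)))"
proof -
  have n3: "3 \<le> n" using sp by (simp add: smooth_polygon_def)
  note nf = nxt_facts[OF n3 i]
  let ?u = "eta i" and ?e = "eta (nxt n i)" and ?w = "eta (nxt n (nxt n i))"
  have dets: "\<forall>i<n. \<bar>det2 (eta i) (eta (nxt n i))\<bar> = 1" using sp by (simp add: smooth_polygon_def)
  have D1: "\<bar>det2 ?u ?e\<bar> = 1" using dets i by auto
  have D2: "\<bar>det2 ?e ?w\<bar> = 1" using dets nf by auto
  have C1: "\<not> (det2 ?w ?e * det2 ?u ?e \<ge> 0 \<and> det2 ?u ?w * det2 ?u ?e \<ge> 0)"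
    using Cint[OF sp i nf(5)] nf by auto
  have C2: "\<not> (det2 ?u ?w * det2 ?e ?w \<ge> 0 \<and> det2 ?e ?u * det2 ?e ?w \<ge> 0)"
    using Cint[OF sp nf(4) i] nf by auto
  have as1: "det2 ?w ?e = - det2 ?e ?w" "det2 ?e ?u = - det2 ?u ?e" by (simp_all add: det2_def)
  show ?thesis
  proof (rule ccontr)
    assume ne: "det2 ?u ?e \<noteq> det2 ?e ?w"
    have "(det2 ?u ?e = 1 \<and> det2 ?e ?w = -1) \<or> (det2 ?u ?e = -1 \<and> det2 ?e ?w = 1)"
      using D1 D2 ne by (auto simp: abs_eq_iff)
    then show False
    proof
      assume h: "det2 ?u ?e = 1 \<and> det2 ?e ?w = -1"
      then show False using C1 C2 as1 h by auto
    next
      assume h: "det2 ?u ?e = -1 \<and> det2 ?e ?w = 1"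
      then show False using C1 C2 as1 h by auto
    qed
  qed
qed

lemma blow_from:
  assumes n: "0 < n" and j: "0 < j"
    and h1: "\<forall>k. dt \<sigma> (eta ((s0 + k) mod n)) (eta ((s0 + Suc k) mod n)) = 1"
    and a1: "dt \<sigma> (eta ((s0 + (j-1)) mod n)) (eta ((s0 + (j+1)) mod n)) = 1"
  shows "can_blow_down n eta ((s0 + j) mod n)"
proof -
  have e1: "dt \<sigma> (eta ((s0 + (j-1)) mod n)) (eta ((s0 + j) mod n)) = 1"
    using h1[rule_format, of "j-1"] j by simp
  have e2: "dt \<sigma> (eta ((s0 + j) mod n)) (eta ((s0 + (j+1)) mod n)) = 1"
    using h1[rule_format, of j] by simp
  have av: "vadd (eta ((s0 + (j-1)) mod n)) (eta ((s0 + (j+1)) mod n)) = eta ((s0 + j) mod n)"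
    using aid[OF e1 e2] a1 by simp
  have p: "prv n ((s0 + j) mod n) = (s0 + (j-1)) mod n" unfolding prv_def using mod_prev[OF j n] .
  have q: "nxt n ((s0 + j) mod n) = (s0 + (j+1)) mod n" unfolding nxt_def using mod_next .
  show ?thesis unfolding can_blow_down_def p q using av by (simp add: vadd_def prod_eq_iff)
qed

lemma hp_ind:
  assumes C: "\<forall>j k. j < n \<longrightarrow> k + 1 < n \<longrightarrow> j \<noteq> k \<longrightarrow> j \<noteq> k + 1 \<longrightarrow>
                 \<not> (dt \<sigma> (W j) (W (Suc k)) \<ge> 0 \<and> dt \<sigma> (W k) (W j) \<ge> 0)"
    and t: "t < n" and st: "dt \<sigma> (W t) (W lo) < 0"
    and rng: "\<forall>k. lo \<le> k \<and> k < hi \<longrightarrow> k + 1 < n \<and> t \<noteq> k \<and> t \<noteq> k + 1"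
  shows "lo \<le> k \<Longrightarrow> k \<le> hi \<Longrightarrow> dt \<sigma> (W t) (W k) < 0"
proof (induction k)
  case 0 then show ?case using st by simp
next
  case (Suc k)
  show ?case
  proof (cases "lo = Suc k")
    case True then show ?thesis using st by simp
  next
    case False
    then have k: "lo \<le> k" "k < hi" using Suc by auto
    then have ih: "dt \<sigma> (W t) (W k) < 0" using Suc by auto
    have r: "k + 1 < n \<and> t \<noteq> k \<and> t \<noteq> k + 1" using rng k by auto
    have "\<not> (dt \<sigma> (W t) (W (Suc k)) \<ge> 0 \<and> dt \<sigma> (W k) (W t) \<ge> 0)" using C t r by auto
    moreover have "dt \<sigma> (W k) (W t) \<ge> 0" using ih dt_anti[of \<sigma> "W k" "W t"] by simp
    ultimately show ?thesis by simp
  qed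
qed



theorem lemma2p46:
  fixes n :: nat and eta :: "nat \<Rightarrow> int \<times> int" and kappa :: "nat \<Rightarrow> real"
  assumes "smooth_polygon n eta kappa" and "n > 4"
  shows "(\<forall>e<n. \<forall>e'<n. e \<noteq> e' \<and> parallel_edges eta e e' \<longrightarrow>
            (\<exists>f<n. f \<noteq> e \<and> f \<noteq> e' \<and> \<not> adjacent_edges n e f \<and> can_blow_down n eta f))
       \<and> (\<forall>i<n. \<not> positive_combination (eta i) (eta (prv n i)) (eta (nxt n i)) \<longrightarrow>
            (\<exists>f<n. f \<noteq> prv n i \<and> f \<noteq> i \<and> f \<noteq> nxt n i \<and> can_blow_down n eta f))"
proof -
  note sp = assms(1)
  have n5: "n \<ge> 5" using assms(2) by simp
  have n0: "0 < n" using n5 by simp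
  have prims: "\<forall>i<n. primitive (eta i)" and inj: "inj_on eta {..<n}"
    and dets: "\<forall>i<n. \<bar>det2 (eta i) (eta (nxt n i))\<bar> = 1"
    using sp unfolding smooth_polygon_def by auto
  define \<sigma> where "\<sigma> = det2 (eta 0) (eta (nxt n 0))"
  have hs: "i < n \<Longrightarrow> det2 (eta i) (eta (nxt n i)) = \<sigma>" for i
  proof (induction i)
    case 0 then show ?case by (simp add: \<sigma>_def)
  next
    case (Suc i)
    then have "nxt n i = Suc i" by (simp add: nxt_def)
    then show ?case using orient_local[OF sp, of i] Suc by simp
  qed
  have "\<bar>\<sigma>\<bar> = 1" using dets n0 by (simp add: \<sigma>_def)
  then have ss: "\<sigma> * \<sigma> = 1" by (metis abs_mult_self_eq mult_1)
  define V where "V k = eta (k mod n)" for k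
  have VD: "dt \<sigma> (V k) (V (Suc k)) = 1" for k
  proof -
    have "nxt n (k mod n) = Suc k mod n" by (simp add: nxt_def mod_Suc_eq)
    then have "det2 (V k) (V (Suc k)) = \<sigma>" using hs[of "k mod n"] n0 by (simp add: V_def)
    then show ?thesis using ss by (simp add: dt_def)
  qed
  have VC: "\<not> (dt \<sigma> (V j) (V (Suc k)) \<ge> 0 \<and> dt \<sigma> (V k) (V j) \<ge> 0)"
    if "j mod n \<noteq> k mod n" "j mod n \<noteq> Suc k mod n" for j k
  proof -
    have nk: "nxt n (k mod n) = Suc k mod n" by (simp add: nxt_def mod_Suc_eq)
    have "\<not> (det2 (eta (j mod n)) (eta (nxt n (k mod n))) * det2 (eta (k mod n)) (eta (nxt n (k mod n))) \<ge> 0 \<and>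
            det2 (eta (k mod n)) (eta (j mod n)) * det2 (eta (k mod n)) (eta (nxt n (k mod n))) \<ge> 0)"
      using Cint[OF sp, of "k mod n" "j mod n"] that n0 nk by simp
    moreover have "det2 (eta (k mod n)) (eta (nxt n (k mod n))) = \<sigma>" using hs n0 by simp
    ultimately show ?thesis using nk by (simp add: dt_def V_def mult.commute)
  qed
  have WD: "\<forall>k. dt \<sigma> (eta ((s0 + k) mod n)) (eta ((s0 + Suc k) mod n)) = 1" for s0
    using VD by (simp add: V_def)
  have WC: "\<forall>j k. j < n \<longrightarrow> k + 1 < n \<longrightarrow> j \<noteq> k \<longrightarrow> j \<noteq> k + 1 \<longrightarrow>
     \<not> (dt \<sigma> ((\<lambda>k. eta ((s0 + k) mod n)) j) ((\<lambda>k. eta ((s0 + k) mod n)) (Suc k)) \<ge> 0 \<and>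
        dt \<sigma> ((\<lambda>k. eta ((s0 + k) mod n)) k) ((\<lambda>k. eta ((s0 + k) mod n)) j) \<ge> 0)" for s0
  proof (intro allI impI)
    fix j k assume a: "j < n" "k + 1 < n" "j \<noteq> k" "j \<noteq> k + 1"
    have "(s0 + j) mod n \<noteq> (s0 + k) mod n" using mod_shift_inj[of s0 j n k] a by auto
    moreover have "(s0 + j) mod n \<noteq> Suc (s0 + k) mod n" using mod_shift_inj[of s0 j n "k+1"] a by auto
    ultimately show "\<not> (dt \<sigma> ((\<lambda>k. eta ((s0 + k) mod n)) j) ((\<lambda>k. eta ((s0 + k) mod n)) (Suc k)) \<ge> 0 \<and>
        dt \<sigma> ((\<lambda>k. eta ((s0 + k) mod n)) k) ((\<lambda>k. eta ((s0 + k) mod n)) j) \<ge> 0)"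
      using VC[of "s0 + j" "s0 + k"] by (simp add: V_def)
  qed
  have neqs: "(s0 + j) mod n \<noteq> (s0 + k) mod n" if "j < n" "k < n" "j \<noteq> k" for s0 j k
    using mod_shift_inj[of s0 j n k] that by auto
  show ?thesis
  proof (intro conjI allI impI)
    fix i assume i: "i < n" and npc: "\<not> positive_combination (eta i) (eta (prv n i)) (eta (nxt n i))"
    define s0 where "s0 = i + n - 1"
    define W where "W k = eta ((s0 + k) mod n)" for k
    have h1: "\<forall>k. dt \<sigma> (W k) (W (Suc k)) = 1" using WD by (simp add: W_def)
    have hn: "W n = W 0" by (simp add: W_def)
    have W0: "W 0 = eta (prv n i)" by (simp add: W_def s0_def prv_def)
    have W1: "W 1 = eta i" using i n0 by (simp add: W_def s0_def)
    have "s0 + 2 = (i + 1) + n" using n0 by (simp add: s0_def)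
    then have s2: "(s0 + 2) mod n = (i + 1) mod n" by (metis mod_add_self2)
    then have W2: "W 2 = eta (nxt n i)" unfolding W_def nxt_def by simp
    have c1: "\<forall>j. 3 \<le> j \<and> j < n \<longrightarrow> \<not> (dt \<sigma> (W j) (W 1) \<ge> 0 \<and> dt \<sigma> (W 0) (W j) \<ge> 0)"
    proof (intro allI impI)
      fix j assume j: "3 \<le> j \<and> j < n"
      show "\<not> (dt \<sigma> (W j) (W 1) \<ge> 0 \<and> dt \<sigma> (W 0) (W j) \<ge> 0)"
        using WC[of s0, rule_format, of j 0] j n5 by (simp add: W_def)
    qed
    have c2: "\<forall>j. 3 \<le> j \<and> j < n \<longrightarrow> \<not> (dt \<sigma> (W j) (W 2) \<ge> 0 \<and> dt \<sigma> (W 1) (W j) \<ge> 0)"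
    proof (intro allI impI)
      fix j assume j: "3 \<le> j \<and> j < n"
      show "\<not> (dt \<sigma> (W j) (W 2) \<ge> 0 \<and> dt \<sigma> (W 1) (W j) \<ge> 0)"
        using WC[of s0, rule_format, of j 1] j n5 by (simp add: W_def numeral_2_eq_2)
    qed
    have a0: "dt \<sigma> (W 0) (W 2) \<le> 0"
    proof (rule ccontr)
      assume "\<not> ?thesis"
      then have ag: "dt \<sigma> (W 0) (W 2) \<ge> 1" by simp
      define a where "a = dt \<sigma> (W 0) (W 2)"
      have av: "vadd (W 0) (W 2) = sm a (W 1)"
        using aid[of \<sigma> "W 0" "W 1" "W 2"] h1 by (simp add: numeral_2_eq_2 a_def)
      have apos: "(of_int a :: real) > 0" using ag by (simp add: a_def)
      have "positive_combination (W 1) (W 0) (W 2)"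
        unfolding positive_combination_def
      proof (intro exI conjI)
        show "(1 / of_int a :: real) > 0" "(1 / of_int a :: real) > 0" using apos by simp_all
        have f: "fst (W 0) + fst (W 2) = a * fst (W 1)" "snd (W 0) + snd (W 2) = a * snd (W 1)"
          using av by (simp_all add: vadd_def sm_def prod_eq_iff)
        have "(of_int (fst (W 0)) + of_int (fst (W 2)) :: real) = of_int a * of_int (fst (W 1))"
          using arg_cong[OF f(1), of "of_int :: int \<Rightarrow> real"] by simp
        then show "real_of_int (fst (W 1)) = 1 / real_of_int a * real_of_int (fst (W 0)) + 1 / real_of_int a * real_of_int (fst (W 2))"
          using apos by (simp add: field_simps)
        have "(of_int (snd (W 0)) + of_int (snd (W 2)) :: real) = of_int a * of_int (snd (W 1))"
          using arg_cong[OF f(2), of "of_int :: int \<Rightarrow> real"] by simp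
        then show "real_of_int (snd (W 1)) = 1 / real_of_int a * real_of_int (snd (W 0)) + 1 / real_of_int a * real_of_int (snd (W 2))"
          using apos by (simp add: field_simps)
      qed
      then show False using npc W0 W1 W2 by simp
    qed
    obtain j where j: "3 \<le> j" "j < n" "dt \<sigma> (W (j-1)) (W (j+1)) = 1"
      using core2[OF n5 h1 hn c1 c2 a0] by blast
    have cb: "can_blow_down n eta ((s0 + j) mod n)"
      using blow_from[OF n0 _ WD[of s0], of j] j by (simp add: W_def)
    have "(s0 + j) mod n \<noteq> (s0 + 0) mod n" "(s0 + j) mod n \<noteq> (s0 + 1) mod n" "(s0 + j) mod n \<noteq> (s0 + 2) mod n"
      using neqs[of j 0] neqs[of j 1] neqs[of j 2] j n5 by auto
    moreover have "(s0 + 0) mod n = prv n i" by (simp add: s0_def prv_def)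
    moreover have "(s0 + 1) mod n = i" using i n0 by (simp add: s0_def)
    moreover have "(s0 + 2) mod n = nxt n i" using s2 by (simp add: nxt_def)
    ultimately show "\<exists>f<n. f \<noteq> prv n i \<and> f \<noteq> i \<and> f \<noteq> nxt n i \<and> can_blow_down n eta f"
      using cb n0 by (intro exI[of _ "(s0 + j) mod n"]) auto
  next
    fix e e' assume e: "e < n" and e': "e' < n" and pe: "e \<noteq> e' \<and> parallel_edges eta e e'"
    have "det2 (eta e') (eta e) = 0" using pe by (simp add: parallel_edges_def det2_def algebra_simps)
    then have "eta e' = eta e \<or> eta e' = vneg (eta e)" using prim_par prims e e' by blast
    moreover have "eta e' \<noteq> eta e" using inj e e' pe by (auto dest: inj_onD)
    ultimately have opp: "eta e' = vneg (eta e)" by simp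
    define W where "W k = eta ((e + k) mod n)" for k
    have h1: "\<forall>k. dt \<sigma> (W k) (W (Suc k)) = 1" using WD by (simp add: W_def)
    have C: "\<forall>j k. j < n \<longrightarrow> k + 1 < n \<longrightarrow> j \<noteq> k \<longrightarrow> j \<noteq> k + 1 \<longrightarrow>
                 \<not> (dt \<sigma> (W j) (W (Suc k)) \<ge> 0 \<and> dt \<sigma> (W k) (W j) \<ge> 0)"
      using WC[of e] by (simp add: W_def)
    define p where "p = (e' + n - e) mod n"
    have pn: "p < n" using n0 by (simp add: p_def)
    have ep: "(e + p) mod n = e'"
    proof -
      have "(e + p) mod n = (e + (e' + n - e)) mod n" by (simp add: p_def mod_add_right_eq)
      also have "e + (e' + n - e) = e' + n" using e by simp
      finally show ?thesis using e' by simp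
    qed
    have W0: "W 0 = eta e" using e by (simp add: W_def)
    have Wp: "W p = vneg (W 0)" using ep opp W0 by (simp add: W_def)
    have Wn: "W n = W 0" by (simp add: W_def)
    have p0: "p \<noteq> 0"
    proof
      assume "p = 0"
      then have "e' = e" using ep e by simp
      then show False using pe by simp
    qed
    have adj: "\<not> adjacent_edges n e ((e + j) mod n)" if "2 \<le> j" "j + 2 \<le> n" for j
    proof -
      have "(e + j) mod n \<noteq> (e + 1) mod n" using neqs[of j 1 e] that by auto
      moreover have "(e + j) mod n \<noteq> (e + (n - 1)) mod n" using neqs[of j "n-1" e] that by auto
      moreover have "prv n e = (e + (n-1)) mod n" using n0 by (simp add: prv_def)
      ultimately show ?thesis by (simp add: adjacent_edges_def nxt_def)
    qed
    have fin: "\<exists>f<n. f \<noteq> e \<and> f \<noteq> e' \<and> \<not> adjacent_edges n e f \<and> can_blow_down n eta f"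
      if J: "2 \<le> J" "J + 2 \<le> n" "J \<noteq> p" "dt \<sigma> (W (J-1)) (W (J+1)) = 1" for J
    proof -
      have cb: "can_blow_down n eta ((e + J) mod n)"
        using blow_from[OF n0 _ WD[of e], of J] J by (simp add: W_def)
      have "(e + J) mod n \<noteq> (e + 0) mod n" using neqs[of J 0 e] J by auto
      moreover have "(e + J) mod n \<noteq> (e + p) mod n" using neqs[of J p e] J pn by auto
      ultimately show ?thesis using cb adj[OF J(1,2)] ep e n0
        by (intro exI[of _ "(e + J) mod n"]) auto
    qed
    show "\<exists>f<n. f \<noteq> e \<and> f \<noteq> e' \<and> \<not> adjacent_edges n e f \<and> can_blow_down n eta f"
    proof (cases "p \<ge> 3")
      case True
      have hp: "\<forall>k. 0 < k \<and> k < p \<longrightarrow> dt \<sigma> (W 0) (W k) > 0"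
      proof (intro allI impI)
        fix k assume k: "0 < k \<and> k < p"
        have st: "dt \<sigma> (W p) (W 1) < 0" using h1[rule_format, of 0] Wp by (simp add: dt_neg1)
        have rng: "\<forall>k. 1 \<le> k \<and> k < p - 1 \<longrightarrow> k + 1 < n \<and> p \<noteq> k \<and> p \<noteq> k + 1"
          using pn by auto
        have "dt \<sigma> (W p) (W k) < 0"
          using hp_ind[OF C pn st rng, of k] k by auto
        then show "dt \<sigma> (W 0) (W k) > 0" using Wp by (simp add: dt_neg1)
      qed
      have h1p: "\<forall>k<p. dt \<sigma> (W k) (W (Suc k)) = 1" using h1 by simp
      obtain j where j: "2 \<le> j" "j < p" "dt \<sigma> (W (j-1)) (W (j+1)) = 1"
        using half_chain[OF h1p Wp hp True] by blast
      show ?thesis using fin[of j] j pn by auto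
    next
      case False
      have "p \<noteq> 1"
      proof
        assume "p = 1"
        then have "dt \<sigma> (W 0) (W 1) = 0" using Wp by (simp add: dt_neg2)
        then show False using h1[rule_format, of 0] by simp
      qed
      then have p2: "p = 2" using False p0 by simp
      define X where "X k = W (2 + k)" for k
      have X1: "\<forall>k<n-2. dt \<sigma> (X k) (X (Suc k)) = 1" using h1 by (simp add: X_def)
      have "2 + (n - 2) = n" using n5 by simp
      then have Xm: "X (n-2) = vneg (X 0)" using Wn Wp p2 by (simp add: X_def)
      have st: "dt \<sigma> (W 0) (W 3) < 0"
      proof -
        have "dt \<sigma> (W 2) (W 3) = 1" using h1[rule_format, of 2] by (simp add: numeral_3_eq_3)
        then show ?thesis using Wp p2 by (simp add: dt_neg1)
      qed
      have Xp: "\<forall>k. 0 < k \<and> k < n-2 \<longrightarrow> dt \<sigma> (X 0) (X k) > 0"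
      proof (intro allI impI)
        fix k assume k: "0 < k \<and> k < n-2"
        have rng: "\<forall>k. 3 \<le> k \<and> k < n - 1 \<longrightarrow> k + 1 < n \<and> 0 \<noteq> k \<and> 0 \<noteq> k + 1"
          by auto
        have "dt \<sigma> (W 0) (W (2+k)) < 0"
          using hp_ind[OF C n0 st rng, of "2+k"] k by auto
        then show "dt \<sigma> (X 0) (X k) > 0" using Wp p2 by (simp add: X_def dt_neg1)
      qed
      have m3: "n - 2 \<ge> 3" using n5 by simp
      obtain j where j: "1 \<le> j" "j + 2 \<le> n - 2" "dt \<sigma> (X (j-1)) (X (j+1)) = 1"
        using half_chain_rev[OF X1 Xm Xp m3] by blast
      have "2 + (j - 1) = (j+2) - 1" "2 + (j+1) = (j+2) + 1" using j by auto
      then have "dt \<sigma> (W ((j+2)-1)) (W ((j+2)+1)) = 1" using j(3) by (simp add: X_def)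
      then show ?thesis using fin[of "j+2"] j p2 by auto
    qed
  qed
qed


end
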